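(* Let $L,M$ be distributive lattices and $T:\mathrm{FBL}\langle L\rangle\to\mathrm{FBL}\langle M\rangle$ a (linear) lattice homomorphism, and define $\Phi_T:M^*\to\mathbb R^L$ by $\Phi_T(y^* )(x)=(T\delta_x)(y^* )$. Then: (1) $\Phi_T$ is continuous when $M^*$ and $\mathbb R^L$ carry the product topologies; (2) if $T$ has dense range and $\|T\|\le1$, then $\Phi_T$ is injective; (3) if $T$ is an isometric lattice isomorphism onto $\mathrm{FBL}\langle M\rangle$, then $\Phi_T$ is a bijection from $M^*$ onto $L^*$ and $\Phi_{T^{-1}}=(\Phi_T)^{-1}$; (4) for all $y_1^*,\dots,y_m^*\in M^*$, $\sup_{x\in L}\sum_{i=1}^m|\Phi_T(y_i^* )(x)|\le\|T\|\sup_{y\in M}\sum_{i=1}^m|y_i^*(y)|$.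
   Context: For a distributive lattice $L$, $L^*$ is the set of all lattice homomorphisms $x^*:L\to[-1,1]$, a subset of $\mathbb R^L$ with the product topology; for $x\in L$, $\delta_x:L^*\to\mathbb R$ is $\delta_x(x^* )=x^*(x)$. A function $f:L^*\to\mathbb R$ is positively homogeneous if $f(\lambda x^* )=\lambda f(x^* )$ whenever $\lambda\ge0$ and $\lambda x^*\in L^*$; for such $f$, $\|f\|=\sup\{\sum_{i=1}^m|f(x_i^* )|: m\in\mathbb N,\ x_i^*\in L^*,\ \sup_{x\in L}\sum_{i=1}^m|x_i^*(x)|\le1\}$. $\mathrm{FBL}\langle L\rangle$ is the norm closure of the vector sublattice generated by $\{\delta_x:x\in L\}$ inside the Banach lattice of positively homogeneous functions on $L^*$ with finite norm, with pointwise order and operations; its elements are continuous functions on $L^*$. *)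

theory Defs
  imports "HOL-Analysis.Analysis"
begin

definition lstar :: "('a::distrib_lattice \<Rightarrow> real) set" where
  "lstar = {h. (\<forall>x. -1 \<le> h x \<and> h x \<le> 1)
              \<and> (\<forall>x y. h (sup x y) = max (h x) (h y))
              \<and> (\<forall>x y. h (inf x y) = min (h x) (h y))}"

text \<open>Functions on L^* are encoded as functions on all of 'a \<Rightarrow> real that vanish off L^*.\<close>
definition delta :: "'a::distrib_lattice \<Rightarrow> ('a \<Rightarrow> real) \<Rightarrow> real" where
  "delta x = (\<lambda>h. if h \<in> lstar then h x else 0)"

definition pos_homog :: "(('a::distrib_lattice \<Rightarrow> real) \<Rightarrow> real) \<Rightarrow> bool" where
  "pos_homog f \<longleftrightarrow>
     (\<forall>c h. c \<ge> 0 \<and> h \<in> lstar \<and> (\<lambda>x. c * h x) \<in> lstar \<longrightarrow> f (\<lambda>x. c * h x) = c * f h)"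

definition fbl_norm :: "(('a::distrib_lattice \<Rightarrow> real) \<Rightarrow> real) \<Rightarrow> ereal" where
  "fbl_norm f = Sup {ereal (\<Sum>i<m. \<bar>f (hs i)\<bar>) | (m::nat) hs.
                      (\<forall>i<m. hs i \<in> lstar) \<and> (\<forall>x. (\<Sum>i<m. \<bar>hs i x\<bar>) \<le> 1)}"

definition ph_space :: "(('a::distrib_lattice \<Rightarrow> real) \<Rightarrow> real) set" where
  "ph_space = {f. (\<forall>h. h \<notin> lstar \<longrightarrow> f h = 0) \<and> pos_homog f \<and> fbl_norm f < \<infinity>}"

inductive_set fbl_gen :: "(('a::distrib_lattice \<Rightarrow> real) \<Rightarrow> real) set" where
  gen_delta: "delta x \<in> fbl_gen"
| gen_add: "f \<in> fbl_gen \<Longrightarrow> g \<in> fbl_gen \<Longrightarrow> (\<lambda>h. f h + g h) \<in> fbl_gen"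
| gen_scale: "f \<in> fbl_gen \<Longrightarrow> (\<lambda>h. c * f h) \<in> fbl_gen"
| gen_max: "f \<in> fbl_gen \<Longrightarrow> g \<in> fbl_gen \<Longrightarrow> (\<lambda>h. max (f h) (g h)) \<in> fbl_gen"
| gen_min: "f \<in> fbl_gen \<Longrightarrow> g \<in> fbl_gen \<Longrightarrow> (\<lambda>h. min (f h) (g h)) \<in> fbl_gen"

definition FBL :: "(('a::distrib_lattice \<Rightarrow> real) \<Rightarrow> real) set" where
  "FBL = {f \<in> ph_space. \<forall>e>0. \<exists>g\<in>fbl_gen. fbl_norm (\<lambda>h. f h - g h) < ereal e}"

definition fbl_lattice_hom ::
  "((('a::distrib_lattice \<Rightarrow> real) \<Rightarrow> real) \<Rightarrow> (('b::distrib_lattice \<Rightarrow> real) \<Rightarrow> real)) \<Rightarrow> bool" where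
  "fbl_lattice_hom T \<longleftrightarrow>
     (\<forall>f\<in>FBL. T f \<in> FBL)
   \<and> (\<forall>f\<in>FBL. \<forall>g\<in>FBL. T (\<lambda>h. f h + g h) = (\<lambda>k. T f k + T g k))
   \<and> (\<forall>c. \<forall>f\<in>FBL. T (\<lambda>h. c * f h) = (\<lambda>k. c * T f k))
   \<and> (\<forall>f\<in>FBL. \<forall>g\<in>FBL. T (\<lambda>h. max (f h) (g h)) = (\<lambda>k. max (T f k) (T g k)))"

definition op_norm ::
  "((('a::distrib_lattice \<Rightarrow> real) \<Rightarrow> real) \<Rightarrow> (('b::distrib_lattice \<Rightarrow> real) \<Rightarrow> real)) \<Rightarrow> ereal" where
  "op_norm T = (SUP f\<in>{f\<in>FBL. fbl_norm f \<le> 1}. fbl_norm (T f))"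

definition Phi ::
  "((('a::distrib_lattice \<Rightarrow> real) \<Rightarrow> real) \<Rightarrow> (('b::distrib_lattice \<Rightarrow> real) \<Rightarrow> real))
     \<Rightarrow> ('b \<Rightarrow> real) \<Rightarrow> ('a \<Rightarrow> real)" where
  "Phi T = (\<lambda>k x. T (delta x) k)"

end

theory Submission
  imports Defs
begin

definition adm :: "nat \<Rightarrow> (nat \<Rightarrow> ('a::distrib_lattice \<Rightarrow> real)) \<Rightarrow> bool" where
  "adm m hs \<longleftrightarrow> (\<forall>i<m. hs i \<in> lstar) \<and> (\<forall>x. (\<Sum>i<m. \<bar>hs i x\<bar>) \<le> 1)"

lemma fbl_norm_ge: "adm m hs \<Longrightarrow> ereal (\<Sum>i<m. \<bar>f (hs i)\<bar>) \<le> fbl_norm f"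
  unfolding fbl_norm_def adm_def by (rule Sup_upper) blast

lemma fbl_norm_le: "(\<And>m hs. adm m hs \<Longrightarrow> (\<Sum>i<m. \<bar>f (hs i)\<bar>) \<le> r) \<Longrightarrow> fbl_norm f \<le> ereal r"
  unfolding fbl_norm_def adm_def by (rule Sup_least) auto

lemma fbl_norm_nonneg: "0 \<le> fbl_norm f"
  using fbl_norm_ge[of 0 "\<lambda>_. \<lambda>_. 0" f] by (simp add: adm_def zero_ereal_def)

lemma lstar_bound: "h \<in> lstar \<Longrightarrow> \<bar>h x\<bar> \<le> 1"
  unfolding lstar_def abs_le_iff by auto

lemma eval_le: "h \<in> lstar \<Longrightarrow> ereal \<bar>f h\<bar> \<le> fbl_norm f"
  using fbl_norm_ge[of 1 "\<lambda>_. h" f] by (simp add: adm_def lstar_bound)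

lemma eval_le': "h \<in> lstar \<Longrightarrow> fbl_norm f \<le> ereal p \<Longrightarrow> \<bar>f h\<bar> \<le> p"
  using eval_le[of h f] by (meson ereal_less_eq(3) order_trans)

lemma norm_bound:
  fixes u v w :: "('a::distrib_lattice \<Rightarrow> real) \<Rightarrow> real"
  assumes "fbl_norm v \<le> ereal p" "fbl_norm w \<le> ereal q" "0 \<le> a" "0 \<le> b"
    and "\<forall>h\<in>lstar. \<bar>u h\<bar> \<le> a*\<bar>v h\<bar> + b*\<bar>w h\<bar>"
  shows "fbl_norm u \<le> ereal (a*p + b*q)"
proof (rule fbl_norm_le)
  fix m and hs :: "nat \<Rightarrow> 'a \<Rightarrow> real" assume ad: "adm m hs"
  have sv: "(\<Sum>i<m. \<bar>v (hs i)\<bar>) \<le> p" using order_trans[OF fbl_norm_ge[OF ad, of v] assms(1)] by simp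
  have sw: "(\<Sum>i<m. \<bar>w (hs i)\<bar>) \<le> q" using order_trans[OF fbl_norm_ge[OF ad, of w] assms(2)] by simp
  have "(\<Sum>i<m. \<bar>u (hs i)\<bar>) \<le> (\<Sum>i<m. a*\<bar>v (hs i)\<bar> + b*\<bar>w (hs i)\<bar>)"
    using ad assms(5) by (intro sum_mono) (auto simp: adm_def)
  also have "\<dots> = a*(\<Sum>i<m. \<bar>v (hs i)\<bar>) + b*(\<Sum>i<m. \<bar>w (hs i)\<bar>)"
    by (simp add: sum.distrib sum_distrib_left)
  also have "\<dots> \<le> a*p + b*q" using sv sw assms(3,4)
    by (intro add_mono mult_left_mono) auto
  finally show "(\<Sum>i<m. \<bar>u (hs i)\<bar>) \<le> a*p + b*q" .
qed

lemma norm_lt_ex: "fbl_norm u < ereal e \<Longrightarrow> \<exists>p<e. fbl_norm u \<le> ereal p"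
  using fbl_norm_nonneg[of u] by (cases "fbl_norm u") (auto intro: less_imp_le)

lemma norm_fin_ex: "fbl_norm u < \<infinity> \<Longrightarrow> \<exists>p. fbl_norm u \<le> ereal p"
  by (cases "fbl_norm u") auto

lemma zero_lstar: "(\<lambda>x. 0) \<in> lstar"
  unfolding lstar_def by auto

lemma lstar_scale:
  assumes "h \<in> lstar" "0 \<le> c" "\<And>x. \<bar>c * h x\<bar> \<le> 1"
  shows "(\<lambda>x. c * h x) \<in> lstar"
proof -
  have "\<And>a b. c * max a b = max (c*a) (c*b)" "\<And>a b. c * min a b = min (c*a) (c*b)"
    using assms(2) by (simp_all add: max_mult_distrib_left min_mult_distrib_left)
  then show ?thesis using assms(1) assms(3) unfolding lstar_def by (auto simp: abs_le_iff)
qed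

lemma le_lt: "fbl_norm u \<le> ereal r \<Longrightarrow> r < e \<Longrightarrow> fbl_norm u < ereal e"
  using le_less_trans[of "fbl_norm u" "ereal r" "ereal e"] by simp

lemma norm_le_nonneg: "fbl_norm u \<le> ereal r \<Longrightarrow> 0 \<le> r"
  using fbl_norm_nonneg[of u] by (metis ereal_less_eq(5) order_trans zero_ereal_def)

lemma FBL_ph: "f \<in> FBL \<Longrightarrow> f \<in> ph_space"
  unfolding FBL_def by auto

lemma ph_bound: "f \<in> ph_space \<Longrightarrow> \<exists>p. fbl_norm f \<le> ereal p"
  unfolding ph_space_def using norm_fin_ex by auto

lemma ph_zero: "f \<in> ph_space \<Longrightarrow> h \<notin> lstar \<Longrightarrow> f h = 0"
  unfolding ph_space_def by auto

lemma ph_homog: "f \<in> ph_space \<Longrightarrow> 0 \<le> c \<Longrightarrow> h \<in> lstar \<Longrightarrow> (\<lambda>x. c * h x) \<in> lstar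
   \<Longrightarrow> f (\<lambda>x. c * h x) = c * f h"
  unfolding ph_space_def pos_homog_def by auto

lemma FBL_approx: "f \<in> FBL \<Longrightarrow> 0 < e \<Longrightarrow> \<exists>g\<in>fbl_gen. \<exists>p<e. fbl_norm (\<lambda>h. f h - g h) \<le> ereal p"
  unfolding FBL_def using norm_lt_ex by blast

lemma ph_spaceI:
  assumes "\<And>h. h \<notin> lstar \<Longrightarrow> f h = 0"
    and "\<And>c h. 0 \<le> c \<Longrightarrow> h \<in> lstar \<Longrightarrow> (\<lambda>x. c * h x) \<in> lstar \<Longrightarrow> f (\<lambda>x. c * h x) = c * f h"
    and "fbl_norm f \<le> ereal p"
  shows "f \<in> ph_space"
  using assms unfolding ph_space_def pos_homog_def
  by (auto intro: le_less_trans[OF assms(3)])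

lemma FBL_add:
  assumes f: "f \<in> FBL" and g: "g \<in> FBL"
  shows "(\<lambda>h. f h + g h) \<in> FBL"
proof -
  obtain p q where p: "fbl_norm f \<le> ereal p" and q: "fbl_norm g \<le> ereal q"
    using ph_bound[OF FBL_ph[OF f]] ph_bound[OF FBL_ph[OF g]] by blast
  have "(\<lambda>h. f h + g h) \<in> ph_space"
  proof (rule ph_spaceI)
    show "fbl_norm (\<lambda>h. f h + g h) \<le> ereal (1*p + 1*q)"
      by (rule norm_bound[OF p q]) auto
  qed (auto simp: ph_zero[OF FBL_ph[OF f]] ph_zero[OF FBL_ph[OF g]]
      ph_homog[OF FBL_ph[OF f]] ph_homog[OF FBL_ph[OF g]] algebra_simps)
  moreover have "\<exists>k\<in>fbl_gen. fbl_norm (\<lambda>h. (f h + g h) - k h) < ereal e" if e: "e > 0" for e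
  proof -
    obtain g1 p1 where g1: "g1 \<in> fbl_gen" "p1 < e/2" "fbl_norm (\<lambda>h. f h - g1 h) \<le> ereal p1"
      using FBL_approx[OF f, of "e/2"] e by auto
    obtain g2 p2 where g2: "g2 \<in> fbl_gen" "p2 < e/2" "fbl_norm (\<lambda>h. g h - g2 h) \<le> ereal p2"
      using FBL_approx[OF g, of "e/2"] e by auto
    have "fbl_norm (\<lambda>h. (f h + g h) - (g1 h + g2 h)) \<le> ereal (1*p1 + 1*p2)"
      by (rule norm_bound[OF g1(3) g2(3)]) auto
    then have "fbl_norm (\<lambda>h. (f h + g h) - (g1 h + g2 h)) < ereal e"
      by (rule le_lt) (use g1 g2 in auto)
    then show ?thesis using fbl_gen.gen_add[OF g1(1) g2(1)] by (intro bexI[where x="\<lambda>h. g1 h + g2 h"]) auto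
  qed
  ultimately show ?thesis unfolding FBL_def by blast
qed

lemma FBL_scale:
  assumes f: "f \<in> FBL"
  shows "(\<lambda>h. c * f h) \<in> FBL"
proof -
  obtain p where p: "fbl_norm f \<le> ereal p"
    using ph_bound[OF FBL_ph[OF f]] by blast
  have "(\<lambda>h. c * f h) \<in> ph_space"
  proof (rule ph_spaceI)
    show "fbl_norm (\<lambda>h. c * f h) \<le> ereal (\<bar>c\<bar>*p + 0*p)"
      by (rule norm_bound[OF p p]) (auto simp: abs_mult)
  qed (auto simp: ph_zero[OF FBL_ph[OF f]] ph_homog[OF FBL_ph[OF f]] algebra_simps)
  moreover have "\<exists>k\<in>fbl_gen. fbl_norm (\<lambda>h. c * f h - k h) < ereal e" if e: "e > 0" for e
  proof -
    obtain g1 p1 where g1: "g1 \<in> fbl_gen" "p1 < e/(\<bar>c\<bar>+1)" "fbl_norm (\<lambda>h. f h - g1 h) \<le> ereal p1"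
      using FBL_approx[OF f, of "e/(\<bar>c\<bar>+1)"] e by auto
    have p1: "0 \<le> p1" using norm_le_nonneg[OF g1(3)] .
    have "fbl_norm (\<lambda>h. c * f h - c * g1 h) \<le> ereal (\<bar>c\<bar>*p1 + 0*p1)"
      by (rule norm_bound[OF g1(3) g1(3)]) (auto simp: abs_mult[symmetric] right_diff_distrib)
    moreover have "\<bar>c\<bar>*p1 + 0*p1 < e"
    proof -
      have "p1 * (\<bar>c\<bar>+1) < e" using g1(2) by (simp add: field_simps)
      then show ?thesis using p1 by (simp add: algebra_simps)
    qed
    ultimately have "fbl_norm (\<lambda>h. c * f h - c * g1 h) < ereal e"
      by (rule le_lt)
    then show ?thesis using fbl_gen.gen_scale[OF g1(1), of c] by (intro bexI[where x="\<lambda>h. c * g1 h"]) auto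
  qed
  ultimately show ?thesis unfolding FBL_def by blast
qed

lemma abs_max_diff: "\<bar>max (a::real) b - max c d\<bar> \<le> 1*\<bar>a - c\<bar> + 1*\<bar>b - d\<bar>"
  by (auto simp: max_def)

lemma FBL_max:
  assumes f: "f \<in> FBL" and g: "g \<in> FBL"
  shows "(\<lambda>h. max (f h) (g h)) \<in> FBL"
proof -
  obtain p q where p: "fbl_norm f \<le> ereal p" and q: "fbl_norm g \<le> ereal q"
    using ph_bound[OF FBL_ph[OF f]] ph_bound[OF FBL_ph[OF g]] by blast
  have "(\<lambda>h. max (f h) (g h)) \<in> ph_space"
  proof (rule ph_spaceI)
    show "fbl_norm (\<lambda>h. max (f h) (g h)) \<le> ereal (1*p + 1*q)"
      by (rule norm_bound[OF p q]) (auto simp: max_def)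
  qed (auto simp: ph_zero[OF FBL_ph[OF f]] ph_zero[OF FBL_ph[OF g]]
      ph_homog[OF FBL_ph[OF f]] ph_homog[OF FBL_ph[OF g]] max_mult_distrib_left)
  moreover have "\<exists>k\<in>fbl_gen. fbl_norm (\<lambda>h. max (f h) (g h) - k h) < ereal e" if e: "e > 0" for e
  proof -
    obtain g1 p1 where g1: "g1 \<in> fbl_gen" "p1 < e/2" "fbl_norm (\<lambda>h. f h - g1 h) \<le> ereal p1"
      using FBL_approx[OF f, of "e/2"] e by auto
    obtain g2 p2 where g2: "g2 \<in> fbl_gen" "p2 < e/2" "fbl_norm (\<lambda>h. g h - g2 h) \<le> ereal p2"
      using FBL_approx[OF g, of "e/2"] e by auto
    have "fbl_norm (\<lambda>h. max (f h) (g h) - max (g1 h) (g2 h)) \<le> ereal (1*p1 + 1*p2)"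
      by (rule norm_bound[OF g1(3) g2(3)]) (auto intro: abs_max_diff)
    then have "fbl_norm (\<lambda>h. max (f h) (g h) - max (g1 h) (g2 h)) < ereal e"
      by (rule le_lt) (use g1 g2 in auto)
    then show ?thesis using fbl_gen.gen_max[OF g1(1) g2(1)] by (intro bexI[where x="\<lambda>h. max (g1 h) (g2 h)"]) auto
  qed
  ultimately show ?thesis unfolding FBL_def by blast
qed

lemma min_as_max: "(\<lambda>h. min (f h) (g h)) = (\<lambda>h. -1 * max (-1 * f h) (-1 * (g h::real)))"
  by (auto simp: max_def min_def)

lemma FBL_min:
  assumes f: "f \<in> FBL" and g: "g \<in> FBL"
  shows "(\<lambda>h. min (f h) (g h)) \<in> FBL"
  unfolding min_as_max by (intro FBL_scale FBL_max assms)

lemma delta_norm: "fbl_norm (delta x) \<le> ereal 1"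
proof (rule fbl_norm_le)
  fix m and hs :: "nat \<Rightarrow> 'a \<Rightarrow> real" assume "adm m hs"
  then show "(\<Sum>i<m. \<bar>delta x (hs i)\<bar>) \<le> 1" by (simp add: adm_def delta_def)
qed

lemma delta_FBL: "delta x \<in> FBL"
proof -
  have n: "fbl_norm (delta x) \<le> ereal 1"
  proof (rule fbl_norm_le)
    fix m and hs :: "nat \<Rightarrow> 'a \<Rightarrow> real" assume "adm m hs"
    then show "(\<Sum>i<m. \<bar>delta x (hs i)\<bar>) \<le> 1" by (simp add: adm_def delta_def)
  qed
  have "delta x \<in> ph_space"
    by (rule ph_spaceI[OF _ _ n]) (auto simp: delta_def)
  moreover have "fbl_norm (\<lambda>h. delta x h - delta x h) < ereal e" if "e > 0" for e
    using norm_bound[OF n n, of 0 0 "\<lambda>h. delta x h - delta x h"] that by (auto intro: le_lt)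
  ultimately show ?thesis unfolding FBL_def using fbl_gen.gen_delta by blast
qed

lemma gen_FBL: "g \<in> fbl_gen \<Longrightarrow> g \<in> FBL"
  by (induction rule: fbl_gen.induct) (auto intro: delta_FBL FBL_add FBL_scale FBL_max FBL_min)

lemma eq_eps: "(\<And>e. 0 < e \<Longrightarrow> \<bar>a - b\<bar> \<le> 2*e) \<Longrightarrow> (a::real) = b"
proof (rule ccontr)
  assume h: "\<And>e. 0 < e \<Longrightarrow> \<bar>a - b\<bar> \<le> 2*e" and "a \<noteq> b"
  have p: "0 < \<bar>a - b\<bar>/4" using \<open>a \<noteq> b\<close> by simp
  have "\<bar>a - b\<bar> \<le> 2*(\<bar>a - b\<bar>/4)" by (rule h[OF p])
  then show False using p by (simp add: field_simps)
qed

lemma FBL_diff: "f \<in> FBL \<Longrightarrow> g \<in> FBL \<Longrightarrow> (\<lambda>h. f h - g h) \<in> FBL"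
  using FBL_add[OF _ FBL_scale, of f g "-1"] by simp

lemma delta_sup: "delta (sup a b) = (\<lambda>h. max (delta a h) (delta b h))"
  unfolding delta_def lstar_def by auto

lemma delta_inf: "delta (inf a b) = (\<lambda>h. min (delta a h) (delta b h))"
  unfolding delta_def lstar_def by auto

lemma gen_cont: "g \<in> fbl_gen \<Longrightarrow> continuous_on lstar g"
proof (induction rule: fbl_gen.induct)
  case (gen_delta x)
  have "continuous_on lstar (\<lambda>h::'a \<Rightarrow> real. h x)"
    by (rule continuous_on_subset[OF continuous_on_product_coordinates]) simp
  then show ?case by (rule continuous_on_cong[THEN iffD1, rotated 2]) (auto simp: delta_def)
qed (auto intro!: continuous_intros)

lemma FBL_cont:
  fixes f :: "('a::distrib_lattice \<Rightarrow> real) \<Rightarrow> real"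
  assumes f: "f \<in> FBL"
  shows "continuous_on lstar f"
proof -
  have "\<forall>n. \<exists>g\<in>fbl_gen. fbl_norm (\<lambda>h. f h - g h) < ereal (inverse (real (Suc n)))"
    using f unfolding FBL_def by auto
  then obtain G where G: "\<And>n. G n \<in> fbl_gen"
    "\<And>n. fbl_norm (\<lambda>h. f h - G n h) < ereal (inverse (real (Suc n)))"
    by metis
  have ul: "uniform_limit lstar G f sequentially"
  proof (rule uniform_limitI)
    fix e :: real assume e: "e > 0"
    obtain N where N: "inverse (real (Suc N)) < e" using reals_Archimedean[OF e] by auto
    have "\<forall>h\<in>lstar. dist (G n h) (f h) < e" if "n \<ge> N" for n
    proof
      fix h :: "'a \<Rightarrow> real" assume h: "h \<in> lstar"
      have a: "\<bar>f h - G n h\<bar> < inverse (real (Suc n))"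
        using le_less_trans[OF eval_le[OF h] G(2)[of n]] by simp
      have b: "inverse (real (Suc n)) \<le> inverse (real (Suc N))"
        using that by (intro le_imp_inverse_le) auto
      have "dist (G n h) (f h) = \<bar>f h - G n h\<bar>" by (simp add: dist_real_def abs_minus_commute)
      then show "dist (G n h) (f h) < e" using a b N by linarith
    qed
    then show "\<forall>\<^sub>F n in sequentially. \<forall>h\<in>lstar. dist (G n h) (f h) < e"
      unfolding eventually_sequentially by blast
  qed
  show ?thesis
    by (rule uniform_limit_theorem[OF _ ul]) (auto intro: gen_cont G(1) always_eventually)
qed

context
  fixes T :: "(('a::distrib_lattice \<Rightarrow> real) \<Rightarrow> real) \<Rightarrow> (('b::distrib_lattice \<Rightarrow> real) \<Rightarrow> real)"
  assumes hom: "fbl_lattice_hom T"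
begin

lemma hom_FBL: "f \<in> FBL \<Longrightarrow> T f \<in> FBL"
  using hom unfolding fbl_lattice_hom_def by blast
lemma hom_add: "f \<in> FBL \<Longrightarrow> g \<in> FBL \<Longrightarrow> T (\<lambda>h. f h + g h) = (\<lambda>k. T f k + T g k)"
  using hom unfolding fbl_lattice_hom_def by blast
lemma hom_scale: "f \<in> FBL \<Longrightarrow> T (\<lambda>h. c * f h) = (\<lambda>k. c * T f k)"
  using hom unfolding fbl_lattice_hom_def by blast
lemma hom_max: "f \<in> FBL \<Longrightarrow> g \<in> FBL \<Longrightarrow> T (\<lambda>h. max (f h) (g h)) = (\<lambda>k. max (T f k) (T g k))"
  using hom unfolding fbl_lattice_hom_def by blast
lemma hom_neg: "f \<in> FBL \<Longrightarrow> T (\<lambda>h. - f h) = (\<lambda>k. - T f k)"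
  using hom_scale[where c="-1"] by simp
lemma FBL_neg: "f \<in> FBL \<Longrightarrow> (\<lambda>h. - f h) \<in> FBL"
  using FBL_scale[where c="-1"] by simp
lemma hom_min: "f \<in> FBL \<Longrightarrow> g \<in> FBL \<Longrightarrow> T (\<lambda>h. min (f h) (g h)) = (\<lambda>k. min (T f k) (T g k))"
proof -
  assume f: "f \<in> FBL" and g: "g \<in> FBL"
  have e: "\<And>u v. (\<lambda>h. min (u h) (v h)) = (\<lambda>h. - max (- u h) (- (v h::real)))"
    by (auto simp: max_def min_def)
  show ?thesis unfolding e
    using hom_neg[OF FBL_max[OF FBL_neg[OF f] FBL_neg[OF g]]]
      hom_max[OF FBL_neg[OF f] FBL_neg[OF g]] hom_neg[OF f] hom_neg[OF g]
    by simp
qed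
lemma hom_diff: "f \<in> FBL \<Longrightarrow> g \<in> FBL \<Longrightarrow> T (\<lambda>h. f h - g h) = (\<lambda>k. T f k - T g k)"
  using hom_add[OF _ FBL_neg, of f g] hom_neg[of g] by simp

lemma part1: "continuous_on lstar (Phi T)"
  unfolding Phi_def
  by (rule continuous_on_coordinatewise_then_product) (use FBL_cont[OF hom_FBL[OF delta_FBL]] in simp)

lemma delta_opnorm: "fbl_norm (T (delta x)) \<le> op_norm T"
  unfolding op_norm_def using delta_FBL[of x] delta_norm[of x]
  by (intro SUP_upper) (auto simp: one_ereal_def)

lemma part4:
  fixes m :: nat and ys :: "nat \<Rightarrow> 'b \<Rightarrow> real"
  assumes ys: "\<forall>i<m. ys i \<in> lstar"
  shows "(SUP x. ereal (\<Sum>i<m. \<bar>Phi T (ys i) x\<bar>)) \<le> op_norm T * (SUP y. ereal (\<Sum>i<m. \<bar>ys i y\<bar>))"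
proof -
  define ES where "ES = (SUP y. ereal (\<Sum>i<m. \<bar>ys i y\<bar>))"
  have summ: "(\<Sum>i<m. \<bar>ys i y\<bar>) \<le> real m" for y
  proof -
    have "(\<Sum>i<m. \<bar>ys i y\<bar>) \<le> (\<Sum>i<m. 1)"
      using ys by (intro sum_mono) (auto intro: lstar_bound)
    then show ?thesis by simp
  qed
  have ES0: "0 \<le> ES" unfolding ES_def
    by (rule SUP_upper2[where i=undefined]) (auto simp: sum_nonneg)
  have ESm: "ES \<le> ereal (real m)" unfolding ES_def
    by (rule SUP_least) (use summ in simp)
  obtain S where S: "ES = ereal S" using ES0 ESm by (cases ES) auto
  have S0: "0 \<le> S" using ES0 S by simp
  have Sy: "(\<Sum>i<m. \<bar>ys i y\<bar>) \<le> S" for y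
  proof -
    have "ereal (\<Sum>i<m. \<bar>ys i y\<bar>) \<le> ES" unfolding ES_def by (rule SUP_upper) simp
    then show ?thesis using S by simp
  qed
  have gF: "T (delta x) \<in> ph_space" for x by (intro FBL_ph hom_FBL delta_FBL)
  show ?thesis
    unfolding ES_def[symmetric] S
  proof (rule SUP_least)
    fix x
    show "ereal (\<Sum>i<m. \<bar>Phi T (ys i) x\<bar>) \<le> op_norm T * ereal S"
    proof (cases "S = 0")
      case True
      have "ys i = (\<lambda>z. 0 * ys i z)" if "i < m" for i
      proof
        fix z
        have "\<bar>ys i z\<bar> \<le> (\<Sum>i<m. \<bar>ys i z\<bar>)"
          using that by (intro member_le_sum) auto
        then show "ys i z = 0 * ys i z" using Sy[of z] True by simp
      qed
      then have "Phi T (ys i) x = 0" if "i < m" for i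
        using ph_homog[OF gF, of 0 "ys i"] ys that zero_lstar by (simp add: Phi_def)
      then show ?thesis using True by (simp add: zero_ereal_def[symmetric])
    next
      case False
      then have Sp: "S > 0" using S0 by simp
      define hs where "hs = (\<lambda>i z. (1/S) * ys i z)"
      have yle: "\<bar>ys i z\<bar> \<le> S" if "i < m" for i z
      proof -
        have "\<bar>ys i z\<bar> \<le> (\<Sum>i<m. \<bar>ys i z\<bar>)"
          using that by (intro member_le_sum) auto
        then show ?thesis using Sy[of z] by simp
      qed
      have hsl: "hs i \<in> lstar" if "i < m" for i
        unfolding hs_def using yle[OF that] ys that Sp
        by (intro lstar_scale) (auto simp: abs_mult field_simps)
      have "adm m hs"
        unfolding adm_def
      proof (intro conjI allI impI hsl)
        fix z
        have "(\<Sum>i<m. \<bar>hs i z\<bar>) = (1/S) * (\<Sum>i<m. \<bar>ys i z\<bar>)"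
          unfolding hs_def using Sp by (simp add: abs_mult sum_distrib_left)
        also have "\<dots> \<le> 1" using Sy[of z] Sp by (simp add: field_simps)
        finally show "(\<Sum>i<m. \<bar>hs i z\<bar>) \<le> 1" .
      qed
      then have A: "ereal (\<Sum>i<m. \<bar>T (delta x) (hs i)\<bar>) \<le> op_norm T"
        using fbl_norm_ge delta_opnorm order_trans by blast
      have ysh: "ys i = (\<lambda>z. S * hs i z)" for i
        unfolding hs_def using Sp by auto
      have "Phi T (ys i) x = S * T (delta x) (hs i)" if "i < m" for i
        using ph_homog[OF gF, of S "hs i"] hsl[OF that] ys that Sp
        by (simp add: Phi_def ysh[symmetric])
      then have "(\<Sum>i<m. \<bar>Phi T (ys i) x\<bar>) = S * (\<Sum>i<m. \<bar>T (delta x) (hs i)\<bar>)"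
        using Sp by (simp add: sum_distrib_left abs_mult)
      then have "ereal (\<Sum>i<m. \<bar>Phi T (ys i) x\<bar>) = ereal (\<Sum>i<m. \<bar>T (delta x) (hs i)\<bar>) * ereal S"
        by (simp add: mult.commute)
      also have "\<dots> \<le> op_norm T * ereal S"
        by (rule ereal_mult_right_mono[OF A]) (use S0 in simp)
      finally show ?thesis .
    qed
  qed
qed

lemma gen_eq:
  assumes d: "\<forall>x. T (delta x) y1 = T (delta x) y2"
  shows "g \<in> fbl_gen \<Longrightarrow> T g y1 = T g y2"
proof (induction rule: fbl_gen.induct)
  case (gen_delta x) then show ?case using d by blast
next
  case (gen_add f g) then show ?case by (simp add: hom_add gen_FBL)
next
  case (gen_scale f c) then show ?case by (simp add: hom_scale gen_FBL)
next
  case (gen_max f g) then show ?case by (simp add: hom_max gen_FBL)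
next
  case (gen_min f g) then show ?case by (simp add: hom_min gen_FBL)
qed

lemma small:
  assumes op: "op_norm T \<le> 1" and u: "u \<in> FBL" and n: "fbl_norm u \<le> ereal p" and e: "p < e"
    and y: "y \<in> lstar"
  shows "\<bar>T u y\<bar> \<le> e"
proof -
  have e0: "0 < e" using norm_le_nonneg[OF n] e by simp
  define v where "v = (\<lambda>h. (1/e) * u h)"
  have vF: "v \<in> FBL" unfolding v_def by (rule FBL_scale[OF u])
  have "fbl_norm v \<le> ereal ((1/e)*p + 0*p)"
    unfolding v_def by (rule norm_bound[OF n n]) (use e0 in \<open>auto simp: abs_mult\<close>)
  moreover have "(1/e)*p + 0*p \<le> 1" using e e0 by (simp add: field_simps)
  ultimately have "fbl_norm v \<le> 1"
    by (metis ereal_less_eq(3) one_ereal_def order_trans)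
  then have "fbl_norm (T v) \<le> op_norm T"
    unfolding op_norm_def using vF by (intro SUP_upper) auto
  then have "fbl_norm (T v) \<le> ereal 1" using op by (simp add: one_ereal_def)
  then have "\<bar>T v y\<bar> \<le> 1" by (rule eval_le'[OF y])
  moreover have "T v y = (1/e) * T u y" unfolding v_def hom_scale[OF u] by simp
  ultimately show ?thesis using e0 by (simp add: abs_mult field_simps)
qed

lemma part2:
  assumes dense: "\<forall>g\<in>FBL. \<forall>e>0. \<exists>f\<in>FBL. fbl_norm (\<lambda>k. g k - T f k) < ereal e"
    and op: "op_norm T \<le> 1"
  shows "inj_on (Phi T) lstar"
proof (rule inj_onI)
  fix y1 y2 :: "'b \<Rightarrow> real" assume y1: "y1 \<in> lstar" and y2: "y2 \<in> lstar" and P: "Phi T y1 = Phi T y2"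
  have d: "\<forall>x. T (delta x) y1 = T (delta x) y2"
    using P unfolding Phi_def by (metis)
  have FE: "T f y1 = T f y2" if f: "f \<in> FBL" for f
  proof (rule eq_eps)
    fix e :: real assume e: "0 < e"
    obtain g p where g: "g \<in> fbl_gen" "p < e" "fbl_norm (\<lambda>h. f h - g h) \<le> ereal p"
      using FBL_approx[OF f e] by auto
    have uF: "(\<lambda>h. f h - g h) \<in> FBL" by (rule FBL_diff[OF f gen_FBL[OF g(1)]])
    have Td: "T (\<lambda>h. f h - g h) = (\<lambda>k. T f k - T g k)" by (rule hom_diff[OF f gen_FBL[OF g(1)]])
    have "\<bar>T f y1 - T g y1\<bar> \<le> e" using small[OF op uF g(3) g(2) y1] Td by simp
    moreover have "\<bar>T f y2 - T g y2\<bar> \<le> e" using small[OF op uF g(3) g(2) y2] Td by simp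
    moreover have "T g y1 = T g y2" by (rule gen_eq[OF d g(1)])
    ultimately show "\<bar>T f y1 - T f y2\<bar> \<le> 2*e" by linarith
  qed
  show "y1 = y2"
  proof
    fix b
    show "y1 b = y2 b"
    proof (rule eq_eps)
      fix e :: real assume e: "0 < e"
      obtain f where f: "f \<in> FBL" "fbl_norm (\<lambda>k. delta b k - T f k) < ereal e"
        using dense delta_FBL[of b] e by blast
      have "\<bar>delta b y1 - T f y1\<bar> \<le> e"
        using le_less_trans[OF eval_le[OF y1] f(2)] by simp
      moreover have "\<bar>delta b y2 - T f y2\<bar> \<le> e"
        using le_less_trans[OF eval_le[OF y2] f(2)] by simp
      ultimately show "\<bar>y1 b - y2 b\<bar> \<le> 2*e"
        using FE[OF f(1)] y1 y2 by (simp add: delta_def)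
    qed
  qed
qed

context
  assumes iso: "\<forall>f\<in>FBL. fbl_norm (T f) = fbl_norm f"
begin

lemma iso_small: "u \<in> FBL \<Longrightarrow> fbl_norm u \<le> ereal p \<Longrightarrow> y \<in> lstar \<Longrightarrow> \<bar>T u y\<bar> \<le> p"
  using iso eval_le' by metis

lemma Phi_lstar: "y \<in> lstar \<Longrightarrow> Phi T y \<in> lstar"
proof -
  assume y: "y \<in> lstar"
  have "\<bar>T (delta x) y\<bar> \<le> 1" for x by (rule iso_small[OF delta_FBL delta_norm y])
  moreover have "T (delta (sup a b)) y = max (T (delta a) y) (T (delta b) y)" for a b
    unfolding delta_sup by (simp add: hom_max delta_FBL)
  moreover have "T (delta (inf a b)) y = min (T (delta a) y) (T (delta b) y)" for a b
    unfolding delta_inf by (simp add: hom_min delta_FBL)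
  ultimately show ?thesis unfolding lstar_def Phi_def by (auto simp: abs_le_iff)
qed

lemma eval_commute:
  assumes y: "y \<in> lstar" and f: "f \<in> FBL"
  shows "T f y = f (Phi T y)"
proof -
  have z: "Phi T y \<in> lstar" by (rule Phi_lstar[OF y])
  have G: "T g y = g (Phi T y)" if "g \<in> fbl_gen" for g
    using that
  proof (induction rule: fbl_gen.induct)
    case (gen_delta x) then show ?case using z by (simp add: delta_def Phi_def)
  next
    case (gen_add f g) then show ?case by (simp add: hom_add gen_FBL)
  next
    case (gen_scale f c) then show ?case by (simp add: hom_scale gen_FBL)
  next
    case (gen_max f g) then show ?case by (simp add: hom_max gen_FBL)
  next
    case (gen_min f g) then show ?case by (simp add: hom_min gen_FBL)
  qed
  show ?thesis
  proof (rule eq_eps)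
    fix e :: real assume e: "0 < e"
    obtain g p where g: "g \<in> fbl_gen" "p < e" "fbl_norm (\<lambda>h. f h - g h) \<le> ereal p"
      using FBL_approx[OF f e] by auto
    have uF: "(\<lambda>h. f h - g h) \<in> FBL" by (rule FBL_diff[OF f gen_FBL[OF g(1)]])
    have Td: "T (\<lambda>h. f h - g h) = (\<lambda>k. T f k - T g k)" by (rule hom_diff[OF f gen_FBL[OF g(1)]])
    have "\<bar>T f y - T g y\<bar> \<le> p" using iso_small[OF uF g(3) y] Td by simp
    moreover have "\<bar>f (Phi T y) - g (Phi T y)\<bar> \<le> p" using eval_le'[OF z g(3)] by simp
    moreover note G[OF g(1)]
    ultimately show "\<bar>T f y - f (Phi T y)\<bar> \<le> 2*e" using g(2) by linarith
  qed
qed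

end

end

lemma inv_hom:
  fixes T :: "(('a::distrib_lattice \<Rightarrow> real) \<Rightarrow> real) \<Rightarrow> (('b::distrib_lattice \<Rightarrow> real) \<Rightarrow> real)"
  assumes hom: "fbl_lattice_hom T" and bij: "bij_betw T FBL FBL"
    and iso: "\<forall>f\<in>FBL. fbl_norm (T f) = fbl_norm f"
  shows "fbl_lattice_hom (inv_into FBL T)" "\<forall>f\<in>FBL. fbl_norm (inv_into FBL T f) = fbl_norm f"
proof -
  define S where "S = inv_into FBL T"
  have inj: "inj_on T FBL" and im: "T ` FBL = FBL" using bij by (auto simp: bij_betw_def)
  have SF: "f \<in> FBL \<Longrightarrow> S f \<in> FBL" for f unfolding S_def using im by (metis inv_into_into)
  have TS: "f \<in> FBL \<Longrightarrow> T (S f) = f" for f unfolding S_def using im by (metis f_inv_into_f)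
  have ST: "u \<in> FBL \<Longrightarrow> T u = v \<Longrightarrow> S v = u" for u v unfolding S_def using inj
    by (metis inv_into_f_f)
  have "fbl_lattice_hom S"
    unfolding fbl_lattice_hom_def
  proof (intro conjI ballI allI)
    fix f g :: "('b \<Rightarrow> real) \<Rightarrow> real" assume f: "f \<in> FBL" and g: "g \<in> FBL"
    show "S (\<lambda>h. f h + g h) = (\<lambda>k. S f k + S g k)"
      by (rule ST[OF FBL_add[OF SF[OF f] SF[OF g]]]) (simp add: hom_add[OF hom] SF f g TS)
    show "S (\<lambda>h. max (f h) (g h)) = (\<lambda>k. max (S f k) (S g k))"
      by (rule ST[OF FBL_max[OF SF[OF f] SF[OF g]]]) (simp add: hom_max[OF hom] SF f g TS)
  next
    fix c and f :: "('b \<Rightarrow> real) \<Rightarrow> real" assume f: "f \<in> FBL"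
    show "S (\<lambda>h. c * f h) = (\<lambda>k. c * S f k)"
      by (rule ST[OF FBL_scale[OF SF[OF f]]]) (simp add: hom_scale[OF hom] SF f TS)
  next
    fix f :: "('b \<Rightarrow> real) \<Rightarrow> real" assume "f \<in> FBL" then show "S f \<in> FBL" by (rule SF)
  qed
  then show "fbl_lattice_hom (inv_into FBL T)" unfolding S_def .
  show "\<forall>f\<in>FBL. fbl_norm (inv_into FBL T f) = fbl_norm f"
    using iso SF TS unfolding S_def by metis
qed

lemma part3:
  fixes T :: "(('a::distrib_lattice \<Rightarrow> real) \<Rightarrow> real) \<Rightarrow> (('b::distrib_lattice \<Rightarrow> real) \<Rightarrow> real)"
  assumes hom: "fbl_lattice_hom T" and bij: "bij_betw T FBL FBL"
    and iso: "\<forall>f\<in>FBL. fbl_norm (T f) = fbl_norm f"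
  shows "bij_betw (Phi T) lstar lstar \<and> (\<forall>h\<in>lstar. Phi (inv_into FBL T) h = inv_into lstar (Phi T) h)"
proof -
  define S where "S = inv_into FBL T"
  have hS: "fbl_lattice_hom S" and iS: "\<forall>f\<in>FBL. fbl_norm (S f) = fbl_norm f"
    using inv_hom[OF hom bij iso] unfolding S_def by auto
  have inj: "inj_on T FBL" and im: "T ` FBL = FBL" using bij by (auto simp: bij_betw_def)
  have SF: "f \<in> FBL \<Longrightarrow> S f \<in> FBL" for f unfolding S_def using im by (metis inv_into_into)
  have TS: "f \<in> FBL \<Longrightarrow> T (S f) = f" for f unfolding S_def using im by (metis f_inv_into_f)
  have ST: "f \<in> FBL \<Longrightarrow> S (T f) = f" for f unfolding S_def using inj by (metis inv_into_f_f)
  have A: "Phi T (Phi S x) = x" if x: "x \<in> lstar" for x :: "'a \<Rightarrow> real"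
  proof
    fix a
    have "S (T (delta a)) x = T (delta a) (Phi S x)"
      by (rule eval_commute[OF hS iS x hom_FBL[OF hom delta_FBL]])
    then show "Phi T (Phi S x) a = x a"
      using ST[OF delta_FBL] x by (simp add: Phi_def delta_def)
  qed
  have B: "Phi S (Phi T y) = y" if y: "y \<in> lstar" for y :: "'b \<Rightarrow> real"
  proof
    fix b
    have "T (S (delta b)) y = S (delta b) (Phi T y)"
      by (rule eval_commute[OF hom iso y SF[OF delta_FBL]])
    then show "Phi S (Phi T y) b = y b"
      using TS[OF delta_FBL] y by (simp add: Phi_def delta_def)
  qed
  have bj: "bij_betw (Phi T) lstar lstar"
    by (rule bij_betw_byWitness[where f'="Phi S"])
       (use A B Phi_lstar[OF hom iso] Phi_lstar[OF hS iS] in auto)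
  have "\<forall>h\<in>lstar. Phi S h = inv_into lstar (Phi T) h"
  proof
    fix h :: "'a \<Rightarrow> real" assume h: "h \<in> lstar"
    show "Phi S h = inv_into lstar (Phi T) h"
      by (rule inv_into_f_eq[symmetric]) (use bj A[OF h] Phi_lstar[OF hS iS h] in \<open>auto simp: bij_betw_def\<close>)
  qed
  then show ?thesis using bj unfolding S_def by auto
qed

theorem mainTheorem18:
  fixes T :: "(('a::distrib_lattice \<Rightarrow> real) \<Rightarrow> real) \<Rightarrow> (('b::distrib_lattice \<Rightarrow> real) \<Rightarrow> real)"
  assumes "fbl_lattice_hom T"
  shows "continuous_on lstar (Phi T)
    \<and> ((\<forall>g\<in>FBL. \<forall>e>0. \<exists>f\<in>FBL. fbl_norm (\<lambda>k. g k - T f k) < ereal e) \<and> op_norm T \<le> 1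
          \<longrightarrow> inj_on (Phi T) lstar)
    \<and> (bij_betw T FBL FBL \<and> (\<forall>f\<in>FBL. fbl_norm (T f) = fbl_norm f)
          \<longrightarrow> bij_betw (Phi T) lstar lstar
              \<and> (\<forall>h\<in>lstar. Phi (inv_into FBL T) h = inv_into lstar (Phi T) h))
    \<and> (\<forall>(m::nat) ys. (\<forall>i<m. ys i \<in> lstar) \<longrightarrow>
          (SUP x. ereal (\<Sum>i<m. \<bar>Phi T (ys i) x\<bar>))
            \<le> op_norm T * (SUP y. ereal (\<Sum>i<m. \<bar>ys i y\<bar>)))"
  using part1[OF assms] part2[OF assms] part3[OF assms] part4[OF assms] by blast

end
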